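(* Let $G$ be a finite simple cubic (3-regular) graph that has no subgraph (not necessarily induced) isomorphic to the graph $L$. Then $V(G)$ can be partitioned into two total dominating sets; equivalently, there is a partition $V(G)=S_1\cup S_2$, $S_1\cap S_2=\emptyset$, such that every vertex of $G$ has at least one neighbor in $S_1$ and at least one neighbor in $S_2$. In other words, the total domatic number $d_t(G)$ (equivalently, the coupon coloring number of $G$) is at least $2$.
   Context: All graphs are finite and simple. A total dominating set of a graph $G$ is a set $T\subseteq V(G)$ such that every vertex $v\in V(G)$ is adjacent to at least one vertex of $T$. The total domatic number $d_t(G)$ is the maximum number of pairwise disjoint total dominating sets whose union is $V(G)$. The graph $L$ is the tree on $10$ vertices consisting of a central vertex $c$ adjacent to three vertices $x_1,x_2,x_3$, where each $x_i$ is further adjacent to two leaves $y_{i,1},y_{i,2}$ (all ten vertices distinct; $9$ edges). *)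

theory Defs
  imports Main
begin

definition simple_graph :: "'a set \<Rightarrow> ('a \<Rightarrow> 'a \<Rightarrow> bool) \<Rightarrow> bool" where
  "simple_graph V E \<longleftrightarrow> finite V \<and> (\<forall>u v. E u v \<longrightarrow> E v u) \<and> (\<forall>v. \<not> E v v)
     \<and> (\<forall>u v. E u v \<longrightarrow> u \<in> V \<and> v \<in> V)"

definition neighbours :: "'a set \<Rightarrow> ('a \<Rightarrow> 'a \<Rightarrow> bool) \<Rightarrow> 'a \<Rightarrow> 'a set" where
  "neighbours V E v = {u \<in> V. E v u}"

definition cubic :: "'a set \<Rightarrow> ('a \<Rightarrow> 'a \<Rightarrow> bool) \<Rightarrow> bool" where
  "cubic V E \<longleftrightarrow> (\<forall>v\<in>V. card (neighbours V E v) = 3)"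

definition total_dominating :: "'a set \<Rightarrow> ('a \<Rightarrow> 'a \<Rightarrow> bool) \<Rightarrow> 'a set \<Rightarrow> bool" where
  "total_dominating V E T \<longleftrightarrow> T \<subseteq> V \<and> (\<forall>v\<in>V. \<exists>u\<in>T. E v u)"

text \<open>The graph L on vertices 0..9: centre 0, middle vertices 1,2,3, where
  vertex i (1..3) has leaves 2*i+2 and 2*i+3.\<close>
definition L_verts :: "nat set" where
  "L_verts = {0..9}"

definition L_edge :: "nat \<Rightarrow> nat \<Rightarrow> bool" where
  "L_edge a b \<longleftrightarrow> (\<exists>i\<in>{1,2,3}. {a,b} = {0,i} \<or> {a,b} = {i, 2*i+2} \<or> {a,b} = {i, 2*i+3})"

definition has_L_subgraph :: "'a set \<Rightarrow> ('a \<Rightarrow> 'a \<Rightarrow> bool) \<Rightarrow> bool" where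
  "has_L_subgraph V E \<longleftrightarrow> (\<exists>f. inj_on f L_verts \<and> f ` L_verts \<subseteq> V \<and>
      (\<forall>a\<in>L_verts. \<forall>b\<in>L_verts. L_edge a b \<longrightarrow> E (f a) (f b)))"

end

theory Submission
  imports Defs Complex_Main
begin

lemma lin_kernel:
  fixes a :: "'e \<Rightarrow> 'a \<Rightarrow> real"
  assumes "finite Eq" "finite X" "card Eq < card X"
  shows "\<exists>x. (\<forall>u. u \<notin> X \<longrightarrow> x u = 0) \<and> (\<exists>u\<in>X. x u \<noteq> 0) \<and>
             (\<forall>e\<in>Eq. (\<Sum>u\<in>X. a e u * x u) = 0)"
  using assms
proof (induction Eq arbitrary: X a rule: finite_induct)
  case empty
  then obtain u0 where u0: "u0 \<in> X" by fastforce
  show ?case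
    by (rule exI[of _ "\<lambda>u. if u = u0 then 1 else 0"]) (use u0 in auto)
next
  case (insert e0 F)
  show ?case
  proof (cases "\<forall>u\<in>X. a e0 u = 0")
    case True
    have "card F < card X" using insert by simp
    from insert.IH[OF insert.prems(1) this, of a] obtain x where
      x: "\<forall>u. u \<notin> X \<longrightarrow> x u = 0" "\<exists>u\<in>X. x u \<noteq> 0" "\<forall>e\<in>F. (\<Sum>u\<in>X. a e u * x u) = 0"
      by blast
    show ?thesis using x True by (intro exI[of _ x]) auto
  next
    case False
    then obtain u0 where u0: "u0 \<in> X" "a e0 u0 \<noteq> 0" by blast
    define X' where "X' = X - {u0}"
    define a' where "a' = (\<lambda>e u. a e u - a e u0 * a e0 u / a e0 u0)"
    have fX': "finite X'" using insert by (simp add: X'_def)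
    have cX': "card F < card X'" using insert u0 by (simp add: X'_def)
    from insert.IH[OF fX' cX', of a'] obtain x' where
      x': "\<forall>u. u \<notin> X' \<longrightarrow> x' u = 0" "\<exists>u\<in>X'. x' u \<noteq> 0" "\<forall>e\<in>F. (\<Sum>u\<in>X'. a' e u * x' u) = 0"
      by blast
    define S where "S = (\<Sum>u\<in>X'. a e0 u * x' u)"
    define x where "x = x'(u0 := - S / a e0 u0)"
    have sumX: "\<And>g. (\<Sum>u\<in>X. g u) = g u0 + (\<Sum>u\<in>X'. g u)"
      using u0 insert by (simp add: X'_def sum.remove)
    have xX': "\<And>u. u \<in> X' \<Longrightarrow> x u = x' u" by (auto simp: x_def X'_def)
    have A: "\<forall>u. u \<notin> X \<longrightarrow> x u = 0" using x' u0 by (auto simp: x_def X'_def)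
    have B: "\<exists>u\<in>X. x u \<noteq> 0"
    proof -
      obtain u1 where "u1 \<in> X'" "x' u1 \<noteq> 0" using x'(2) by blast
      moreover have "u1 \<in> X" using \<open>u1 \<in> X'\<close> by (simp add: X'_def)
      moreover have "x u1 \<noteq> 0" using xX'[of u1] \<open>u1 \<in> X'\<close> \<open>x' u1 \<noteq> 0\<close> by simp
      ultimately show ?thesis by blast
    qed
    have C0: "(\<Sum>u\<in>X. a e0 u * x u) = 0"
    proof -
      have "(\<Sum>u\<in>X. a e0 u * x u) = a e0 u0 * x u0 + (\<Sum>u\<in>X'. a e0 u * x u)" by (rule sumX)
      also have "(\<Sum>u\<in>X'. a e0 u * x u) = S" unfolding S_def by (rule sum.cong) (auto simp: xX')
      finally show ?thesis using u0 by (simp add: x_def)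
    qed
    have xu0: "x u0 = - S / a e0 u0" by (simp add: x_def)
    have C1: "(\<Sum>u\<in>X. a e u * x u) = 0" if e: "e \<in> F" for e
    proof -
      define r where "r = a e u0 / a e0 u0"
      have pt: "a' e u * x' u = a e u * x' u - r * (a e0 u * x' u)" for u
        by (simp add: a'_def r_def algebra_simps)
      have "(\<Sum>u\<in>X'. a' e u * x' u) = (\<Sum>u\<in>X'. a e u * x' u) - r * S"
        unfolding pt S_def by (simp add: sum_subtractf sum_distrib_left)
      hence s1: "(\<Sum>u\<in>X'. a e u * x' u) = r * S" using x'(3) e by simp
      have "(\<Sum>u\<in>X. a e u * x u) = a e u0 * x u0 + (\<Sum>u\<in>X'. a e u * x u)" by (rule sumX)
      also have "(\<Sum>u\<in>X'. a e u * x u) = (\<Sum>u\<in>X'. a e u * x' u)" by (rule sum.cong) (auto simp: xX')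
      also have "\<dots> = r * S" by (rule s1)
      also have "a e u0 * x u0 + r * S = 0" using u0(2) unfolding xu0 r_def by (simp add: field_simps)
      finally show ?thesis .
    qed
    have C: "\<forall>e\<in>insert e0 F. (\<Sum>u\<in>X. a e u * x u) = 0" using C0 C1 by blast
    show ?thesis using A B C by blast
  qed
qed

lemma surplus_color:
  assumes "finite F" "\<forall>f\<in>F. finite f"
    "\<forall>G\<subseteq>F. G \<noteq> {} \<longrightarrow> card G < card (\<Union>G)"
  shows "\<exists>c::'a\<Rightarrow>bool. \<forall>f\<in>F. \<exists>u\<in>f. \<exists>u'\<in>f. c u \<noteq> c u'"
  using assms
proof (induction "card F" arbitrary: F rule: less_induct)
  case less
  show ?case
  proof (cases "F = {}")
    case True then show ?thesis by auto
  next
    case False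
    define X where "X = \<Union>F"
    have fX: "finite X" using less.prems(1,2) by (auto simp: X_def)
    have cX: "card F < card X" using less.prems(3) False unfolding X_def by blast
    obtain x where x: "\<forall>u. u \<notin> X \<longrightarrow> x u = 0" "\<exists>u\<in>X. x u \<noteq> (0::real)"
      "\<forall>f\<in>F. (\<Sum>u\<in>X. (if u \<in> f then 1 else 0) * x u) = 0"
      using lin_kernel[OF less.prems(1) fX cX, of "\<lambda>f u. if u \<in> f then 1 else 0"] by blast
    have sumf: "(\<Sum>u\<in>f. x u) = 0" if "f \<in> F" for f
    proof -
      have "(\<Sum>u\<in>X. (if u \<in> f then 1 else 0) * x u) = (\<Sum>u\<in>X. if u \<in> f then x u else 0)"
        by (rule sum.cong) auto
      also have "\<dots> = (\<Sum>u\<in>X \<inter> f. x u)" using fX by (simp add: sum.inter_restrict)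
      also have "X \<inter> f = f" using that by (auto simp: X_def)
      finally show ?thesis using x(3) that by simp
    qed
    define F' where "F' = {f\<in>F. \<forall>u\<in>f. x u = 0}"
    obtain u0 where u0: "u0 \<in> X" "x u0 \<noteq> 0" using x by blast
    then obtain f0 where f0: "f0 \<in> F" "u0 \<in> f0" by (auto simp: X_def)
    have "F' \<subset> F" using f0 u0 by (auto simp: F'_def)
    hence lt: "card F' < card F" using less.prems(1) by (simp add: psubset_card_mono)
    have sub: "F' \<subseteq> F" by (auto simp: F'_def)
    have "finite F'" using less.prems(1) sub by (rule finite_subset[rotated])
    moreover have "\<forall>f\<in>F'. finite f" using less.prems(2) sub by blast
    moreover have "\<forall>G\<subseteq>F'. G \<noteq> {} \<longrightarrow> card G < card (\<Union>G)"
      using less.prems(3) sub by blast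
    ultimately have "finite F'" "\<forall>f\<in>F'. finite f" "\<forall>G\<subseteq>F'. G \<noteq> {} \<longrightarrow> card G < card (\<Union>G)" by blast+
    from less.hyps[OF lt this] obtain c' :: "'a \<Rightarrow> bool" where c': "\<forall>f\<in>F'. \<exists>u\<in>f. \<exists>u'\<in>f. c' u \<noteq> c' u'" by blast
    define c where "c = (\<lambda>u. if x u = 0 then c' u else x u > 0)"
    have "\<exists>u\<in>f. \<exists>u'\<in>f. c u \<noteq> c u'" if f: "f \<in> F" for f
    proof (cases "f \<in> F'")
      case True
      then obtain u u' where "u \<in> f" "u' \<in> f" "c' u \<noteq> c' u'" using c' by blast
      moreover have "\<forall>w\<in>f. x w = 0" using True by (auto simp: F'_def)
      ultimately show ?thesis by (auto simp: c_def)
    next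
      case False
      then obtain u where u: "u \<in> f" "x u \<noteq> 0" using f by (auto simp: F'_def)
      have ff: "finite f" using less.prems(2) f by auto
      have s: "(\<Sum>w\<in>f. x w) = 0" using sumf f by blast
      have pos: "\<exists>w\<in>f. x w > 0"
      proof (rule ccontr)
        assume "\<not> ?thesis"
        hence "\<forall>w\<in>f. x w \<le> 0" by auto
        hence le: "\<forall>w\<in>f. x w \<le> 0" by auto
        have e1: "(\<Sum>w\<in>f. x w) = x u + (\<Sum>w\<in>f-{u}. x w)" using u ff by (simp add: sum.remove)
        have e2: "(\<Sum>w\<in>f-{u}. x w) \<le> 0" using le by (intro sum_nonpos) auto
        have "x u < 0" using le u by force
        hence "(\<Sum>w\<in>f. x w) < 0" using e1 e2 by linarith
        thus False using s by simp
      qed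
      have neg: "\<exists>w\<in>f. x w < 0"
      proof (rule ccontr)
        assume "\<not> ?thesis"
        hence "\<forall>w\<in>f. x w \<ge> 0" by auto
        hence le: "\<forall>w\<in>f. x w \<ge> 0" by auto
        have e1: "(\<Sum>w\<in>f. x w) = x u + (\<Sum>w\<in>f-{u}. x w)" using u ff by (simp add: sum.remove)
        have e2: "(\<Sum>w\<in>f-{u}. x w) \<ge> 0" using le by (intro sum_nonneg) auto
        have "x u > 0" using le u by force
        hence "(\<Sum>w\<in>f. x w) > 0" using e1 e2 by linarith
        thus False using s by simp
      qed
      from pos neg obtain w1 w2 where "w1 \<in> f" "x w1 > 0" "w2 \<in> f" "x w2 < 0" by blast
      thus ?thesis by (intro bexI[of _ w1] bexI[of _ w2]) (auto simp: c_def)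
    qed
    thus ?thesis by blast
  qed
qed

locale cg =
  fixes V :: "'a set" and E :: "'a \<Rightarrow> 'a \<Rightarrow> bool"
  assumes sg: "simple_graph V E" and cub: "cubic V E"
begin

abbreviation N where "N \<equiv> neighbours V E"

lemma finV: "finite V" using sg by (simp add: simple_graph_def)
lemma sym: "E u v \<Longrightarrow> E v u" using sg by (simp add: simple_graph_def)
lemma irr: "\<not> E v v" using sg by (simp add: simple_graph_def)
lemma inV1: "E u v \<Longrightarrow> u \<in> V" using sg by (simp add: simple_graph_def)
lemma inV2: "E u v \<Longrightarrow> v \<in> V" using sg by (simp add: simple_graph_def)
lemma N_iff: "u \<in> N v \<longleftrightarrow> E v u" using inV2 by (auto simp: neighbours_def)
lemma N_sub: "N v \<subseteq> V" by (auto simp: neighbours_def)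
lemma finN: "finite (N v)" using finV N_sub finite_subset by blast
lemma cardN: "v \<in> V \<Longrightarrow> card (N v) = 3" using cub by (simp add: cubic_def)
lemma E_neq: "E u v \<Longrightarrow> u \<noteq> v" using irr by blast

definition NS where "NS Y = (\<Union>y\<in>Y. N y)"
definition dfc where "dfc Y u = 3 - card (N u \<inter> Y)"

lemma NS_sub: "NS Y \<subseteq> V" using N_sub by (auto simp: NS_def)
lemma finNS: "finite (NS Y)" using NS_sub finV finite_subset by blast
lemma NS_iff: "u \<in> NS Y \<longleftrightarrow> (\<exists>y\<in>Y. E y u)" by (auto simp: NS_def N_iff)

lemma count:
  assumes Y: "Y \<subseteq> V"
  shows "3 * card (NS Y) = 3 * card Y + (\<Sum>u\<in>NS Y. dfc Y u)"
proof -
  have fY: "finite Y" using Y finV finite_subset by blast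
  have c1: "card (N u \<inter> Y) = (\<Sum>y\<in>Y. if E u y then 1 else 0)" for u
  proof -
    have "N u \<inter> Y = {y\<in>Y. E u y}" by (auto simp: N_iff)
    moreover have "(\<Sum>y\<in>Y. if E u y then 1 else 0) = card {y\<in>Y. E u y}"
      using fY by (simp add: sum.If_cases Int_def)
    ultimately show ?thesis by simp
  qed
  have c2: "(\<Sum>u\<in>NS Y. if E u y then 1 else 0) = (3::nat)" if y: "y \<in> Y" for y
  proof -
    have "{u\<in>NS Y. E u y} = N y" using y by (auto simp: NS_iff N_iff intro: sym)
    moreover have "(\<Sum>u\<in>NS Y. if E u y then 1 else 0) = card {u\<in>NS Y. E u y}"
      using finNS by (simp add: sum.If_cases Int_def)
    ultimately show ?thesis using cardN[of y] y Y by auto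
  qed
  have "(\<Sum>u\<in>NS Y. card (N u \<inter> Y)) = (\<Sum>u\<in>NS Y. \<Sum>y\<in>Y. if E u y then 1 else 0)"
    by (simp add: c1)
  also have "\<dots> = (\<Sum>y\<in>Y. \<Sum>u\<in>NS Y. if E u y then 1 else 0)" by (rule sum.swap)
  also have "\<dots> = (\<Sum>y\<in>Y. 3)" by (rule sum.cong) (auto simp: c2)
  finally have s1: "(\<Sum>u\<in>NS Y. card (N u \<inter> Y)) = 3 * card Y" by simp
  have le3: "card (N u \<inter> Y) \<le> 3" if "u \<in> NS Y" for u
  proof -
    have "u \<in> V" using that NS_sub by blast
    hence "card (N u) = 3" by (rule cardN)
    moreover have "card (N u \<inter> Y) \<le> card (N u)" using finN by (simp add: card_mono)
    ultimately show ?thesis by simp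
  qed
  have "(\<Sum>u\<in>NS Y. dfc Y u) + (\<Sum>u\<in>NS Y. card (N u \<inter> Y)) = (\<Sum>u\<in>NS Y. dfc Y u + card (N u \<inter> Y))"
    by (simp add: sum.distrib)
  also have "\<dots> = (\<Sum>u\<in>NS Y. 3)" by (rule sum.cong) (auto simp: dfc_def le3)
  finally show ?thesis using s1 by simp
qed

definition conn where "conn \<longleftrightarrow> (\<forall>S\<subseteq>V. S \<noteq> {} \<longrightarrow> (\<forall>v\<in>S. N v \<subseteq> S) \<longrightarrow> S = V)"

lemma tight:
  assumes c: conn and Y: "Y \<subseteq> V" "Y \<noteq> {}" and pq: "E p q" "p \<notin> Y" "q \<notin> Y"
  shows "\<exists>u\<in>NS Y. dfc Y u \<ge> 1"
proof (rule ccontr)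
  assume nt: "\<not> (\<exists>u\<in>NS Y. dfc Y u \<ge> 1)"
  have sat: "N u \<subseteq> Y" if "u \<in> NS Y" for u
  proof -
    have "u \<in> V" using that NS_sub by blast
    hence c3: "card (N u) = 3" by (rule cardN)
    have "dfc Y u = 0" using nt that by force
    hence "card (N u \<inter> Y) \<ge> 3" by (simp add: dfc_def)
    hence "card (N u \<inter> Y) = card (N u)" using c3 finN card_mono[of "N u" "N u \<inter> Y"]
      by (simp add: card_mono le_antisym)
    hence "N u \<inter> Y = N u" using finN by (metis card_subset_eq inf_le1)
    thus ?thesis by blast
  qed
  define C where "C = Y \<inter> NS Y"
  have Csub: "C \<subseteq> V" using Y by (auto simp: C_def)
  have Ccl: "\<forall>v\<in>C. N v \<subseteq> C"
  proof
    fix v assume v: "v \<in> C"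
    have "N v \<subseteq> NS Y" using v by (auto simp: C_def NS_def)
    moreover have "N v \<subseteq> Y" using v sat by (auto simp: C_def)
    ultimately show "N v \<subseteq> C" by (auto simp: C_def)
  qed
  show False
  proof (cases "C = {}")
    case False
    hence "C = V" using c Csub Ccl by (auto simp: conn_def)
    moreover have "p \<in> V" using pq inV1 by blast
    ultimately show False using pq by (auto simp: C_def)
  next
    case True
    define T where "T = Y \<union> NS Y"
    have "T \<subseteq> V" using Y NS_sub by (auto simp: T_def)
    moreover have "T \<noteq> {}" using Y by (auto simp: T_def)
    moreover have "\<forall>v\<in>T. N v \<subseteq> T"
    proof
      fix v assume v: "v \<in> T"
      show "N v \<subseteq> T"
      proof (cases "v \<in> Y")
        case True thus ?thesis by (auto simp: T_def NS_def)
      next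
        case False thus ?thesis using v sat by (auto simp: T_def)
      qed
    qed
    ultimately have "T = V" using c by (auto simp: conn_def)
    moreover have "p \<in> V" using pq inV1 by blast
    ultimately have "p \<in> NS Y" using pq by (auto simp: T_def)
    hence "N p \<subseteq> Y" by (rule sat)
    thus False using pq by (auto simp: N_iff)
  qed
qed

lemma tight_sum:
  assumes "conn" "Y \<subseteq> V" "Y \<noteq> {}" "E p q" "p \<notin> Y" "q \<notin> Y"
  shows "(\<Sum>u\<in>NS Y. dfc Y u) \<ge> 1"
proof -
  obtain u where u: "u \<in> NS Y" "dfc Y u \<ge> 1" using tight[OF assms] by blast
  have "dfc Y u \<le> (\<Sum>u\<in>NS Y. dfc Y u)" using u finNS by (intro member_le_sum) auto
  thus ?thesis using u by simp
qed

definition good :: "('a \<Rightarrow> bool) \<Rightarrow> bool" where "good c \<longleftrightarrow> (\<forall>v\<in>V. \<exists>u\<in>N v. \<exists>u'\<in>N v. c u \<noteq> c u')"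

end

context cg
begin

lemma dfc2:
  assumes u: "u \<in> V" and s: "s1 \<noteq> s2" "s1 \<in> N u" "s2 \<in> N u" "s1 \<notin> Y" "s2 \<notin> Y"
  shows "dfc Y u \<ge> 2"
proof -
  have "N u \<inter> Y \<subseteq> N u - {s1, s2}" using s by auto
  moreover have "card (N u - {s1,s2}) = 1" using cardN[OF u] s finN by (simp add: card_Diff_subset)
  ultimately have "card (N u \<inter> Y) \<le> 1" using finN by (metis card_mono finite_Diff)
  thus ?thesis by (simp add: dfc_def)
qed

lemma dfc1:
  assumes u: "u \<in> V" and s: "s1 \<in> N u" "s1 \<notin> Y"
  shows "dfc Y u \<ge> 1"
proof -
  have "N u \<inter> Y \<subseteq> N u - {s1}" using s by auto
  moreover have "card (N u - {s1}) = 2" using cardN[OF u] s finN by (simp add: card_Diff_subset)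
  ultimately have "card (N u \<inter> Y) \<le> 2" using finN by (metis card_mono finite_Diff)
  thus ?thesis by (simp add: dfc_def)
qed

lemma sum_ge_card:
  assumes "K \<subseteq> A" "finite A" "\<forall>u\<in>K. f u \<ge> (m::nat)"
  shows "(\<Sum>u\<in>A. f u) \<ge> m * card K"
proof -
  have fK: "finite K" using assms finite_subset by blast
  have "m * card K = (\<Sum>u\<in>K. m)" by simp
  also have "\<dots> \<le> (\<Sum>u\<in>K. f u)" using assms(3) by (intro sum_mono) auto
  also have "\<dots> \<le> (\<Sum>u\<in>A. f u)" using assms(1,2) by (intro sum_mono2) auto
  finally show ?thesis .
qed

lemma case4:
  assumes c: conn and e: "E v a" "E a w" "E w b" "E b v" "v \<noteq> w" "a \<noteq> b"
  shows "\<exists>col. good col"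
proof -
  have d: "v \<noteq> a" "a \<noteq> w" "w \<noteq> b" "b \<noteq> v" using e E_neq by auto
  have inS: "v \<in> V" "a \<in> V" "w \<in> V" "b \<in> V" using e inV1 by auto
  define S where "S = {v,a,w,b}"
  define P where "P = {{a,b},{v,w}}"
  define F where "F = N ` (V - S) \<union> P"
  have finF: "finite F" using finV by (simp add: F_def P_def)
  have finf: "\<forall>f\<in>F. finite f" using finN by (auto simp: F_def P_def)
  have cS: "card S = 4" using d e by (simp add: S_def)
  have PS: "\<Union>P = S" by (auto simp: P_def S_def)
  have cP: "card P = 2" using d e by (auto simp: P_def doubleton_eq_iff)
  have key: "card Y + card Q < card (NS Y \<union> \<Union>Q)"
    if Y: "Y \<subseteq> V - S" and Q: "Q \<subseteq> P" and ne: "Y \<noteq> {} \<or> Q \<noteq> {}" for Y Q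
  proof -
    have YV: "Y \<subseteq> V" using Y by auto
    define K where "K = NS Y \<inter> S"
    define j where "j = card ({a,b} \<inter> NS Y)"
    define j' where "j' = card ({v,w} \<inter> NS Y)"
    have KK: "K = ({a,b} \<inter> NS Y) \<union> ({v,w} \<inter> NS Y)" by (auto simp: K_def S_def)
    have kj: "card K = j + j'" unfolding KK j_def j'_def using d e
      by (subst card_Un_disjoint) auto
    have j2a: "j \<le> 2" unfolding j_def using card_mono[of "{a,b}" "{a,b} \<inter> NS Y"] e(6) by simp
    have j2b: "j' \<le> 2" unfolding j'_def using card_mono[of "{v,w}" "{v,w} \<inter> NS Y"] e(5) by simp
    note j2 = j2a j2b
    have cnt: "3 * card (NS Y) = 3 * card Y + (\<Sum>u\<in>NS Y. dfc Y u)" by (rule count[OF YV])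
    have dK: "\<forall>u\<in>K. dfc Y u \<ge> 2"
    proof
      fix u assume u: "u \<in> K"
      hence uV: "u \<in> V" using NS_sub by (auto simp: K_def)
      have YS: "\<And>x. x \<in> S \<Longrightarrow> x \<notin> Y" using Y by auto
      from u have "u = v \<or> u = a \<or> u = w \<or> u = b" by (auto simp: K_def S_def)
      thus "dfc Y u \<ge> 2"
      proof (elim disjE)
        assume "u = v" thus ?thesis using dfc2[OF uV e(6), of Y] e YS sym by (auto simp: N_iff S_def)
      next
        assume "u = a" thus ?thesis using dfc2[OF uV e(5), of Y] e YS sym by (auto simp: N_iff S_def)
      next
        assume "u = w" thus ?thesis using dfc2[OF uV e(6), of Y] e YS sym by (auto simp: N_iff S_def)
      next
        assume "u = b" thus ?thesis using dfc2[OF uV e(5), of Y] e YS sym by (auto simp: N_iff S_def)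
      qed
    qed
    have sK: "(\<Sum>u\<in>NS Y. dfc Y u) \<ge> 2 * card K"
      by (rule sum_ge_card) (use dK finNS in \<open>auto simp: K_def\<close>)
    have sY: "Y \<noteq> {} \<Longrightarrow> (\<Sum>u\<in>NS Y. dfc Y u) \<ge> 1"
      by (rule tight_sum[OF c YV _ e(1)]) (use Y in \<open>auto simp: S_def\<close>)
    have Ye: "Y = {} \<Longrightarrow> NS Y = {}" by (simp add: NS_def)
    have un: "card (NS Y \<union> \<Union>Q) = card (NS Y) + card (\<Union>Q - NS Y)"
    proof -
      have "NS Y \<union> \<Union>Q = NS Y \<union> (\<Union>Q - NS Y)" by blast
      moreover have "finite (\<Union>Q - NS Y)"
      proof -
        have "\<Union>Q \<subseteq> S" using Q PS by blast
        moreover have "finite S" by (simp add: S_def)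
        ultimately show ?thesis using finite_subset by blast
      qed
      ultimately show ?thesis using finNS[of Y] card_Un_disjoint[of "NS Y" "\<Union>Q - NS Y"] by auto
    qed
    have ab: "card ({a,b} - NS Y) = 2 - j"
    proof -
      have "card ({a,b} - NS Y) = card {a,b} - card ({a,b} \<inter> NS Y)"
        by (rule card_Diff_subset_Int) simp
      thus ?thesis using e(6) by (simp add: j_def)
    qed
    have vw: "card ({v,w} - NS Y) = 2 - j'"
    proof -
      have "card ({v,w} - NS Y) = card {v,w} - card ({v,w} \<inter> NS Y)"
        by (rule card_Diff_subset_Int) simp
      thus ?thesis using e(5) by (simp add: j'_def)
    qed
    have SS: "card (S - NS Y) = 4 - card K"
    proof -
      have "card (S - NS Y) = card S - card (S \<inter> NS Y)"
        by (rule card_Diff_subset_Int) (simp add: S_def)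
      moreover have "S \<inter> NS Y = K" by (auto simp: K_def)
      ultimately show ?thesis using cS by simp
    qed
    have Qc: "Q = {} \<or> Q = {{a,b}} \<or> Q = {{v,w}} \<or> Q = P" using Q by (auto simp: P_def)
    from Qc show ?thesis
    proof (elim disjE)
      assume Q0: "Q = {}"
      hence "Y \<noteq> {}" using ne by simp
      hence "(\<Sum>u\<in>NS Y. dfc Y u) \<ge> 1" by (rule sY)
      thus ?thesis using cnt Q0 by simp
    next
      assume Q1: "Q = {{a,b}}"
      show ?thesis
      proof (cases "Y = {}")
        case True thus ?thesis using Q1 Ye e(6) by simp
      next
        case False
        hence "(\<Sum>u\<in>NS Y. dfc Y u) \<ge> 1" by (rule sY)
        thus ?thesis using Q1 un ab cnt sK kj j2 by simp
      qed
    next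
      assume Q1: "Q = {{v,w}}"
      show ?thesis
      proof (cases "Y = {}")
        case True thus ?thesis using Q1 Ye e(5) by simp
      next
        case False
        hence "(\<Sum>u\<in>NS Y. dfc Y u) \<ge> 1" by (rule sY)
        thus ?thesis using Q1 un vw cnt sK kj j2 by simp
      qed
    next
      assume Q1: "Q = P"
      show ?thesis
      proof (cases "Y = {}")
        case True thus ?thesis using Q1 Ye cS PS cP by simp
      next
        case False
        have "card K \<le> 4" using kj j2 by simp
        thus ?thesis using Q1 un SS cnt sK cP PS by simp
      qed
    qed
  qed
  have surp: "\<forall>G\<subseteq>F. G \<noteq> {} \<longrightarrow> card G < card (\<Union>G)"
  proof (intro allI impI)
    fix G assume G: "G \<subseteq> F" "G \<noteq> {}"
    define Y where "Y = {u\<in>V - S. N u \<in> G}"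
    define Q where "Q = G \<inter> P"
    have Y: "Y \<subseteq> V - S" by (auto simp: Y_def)
    have Q: "Q \<subseteq> P" by (auto simp: Q_def)
    have GYQ: "G \<subseteq> N ` Y \<union> Q" using G(1) by (auto simp: F_def Y_def Q_def)
    have ne: "Y \<noteq> {} \<or> Q \<noteq> {}" using GYQ G(2) by auto
    have fY: "finite Y" using Y finV finite_subset by blast
    have fQ: "finite Q" using finite_subset[OF Q] by (simp add: P_def)
    have "card G \<le> card (N ` Y \<union> Q)" using GYQ fY fQ by (simp add: card_mono)
    also have "\<dots> \<le> card (N ` Y) + card Q" by (rule card_Un_le)
    also have "\<dots> \<le> card Y + card Q" using fY by (simp add: card_image_le)
    also have "\<dots> < card (NS Y \<union> \<Union>Q)" by (rule key[OF Y Q ne])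
    also have "\<dots> \<le> card (\<Union>G)"
    proof (rule card_mono)
      have "finite G" using G(1) finF finite_subset by blast
      moreover have "\<forall>g\<in>G. finite g" using G(1) finf by blast
      ultimately show "finite (\<Union>G)" by auto
      show "NS Y \<union> \<Union>Q \<subseteq> \<Union>G" by (auto simp: NS_def Y_def Q_def)
    qed
    finally show "card G < card (\<Union>G)" .
  qed
  obtain col :: "'a \<Rightarrow> bool" where col: "\<forall>f\<in>F. \<exists>u\<in>f. \<exists>u'\<in>f. col u \<noteq> col u'"
    using surplus_color[OF finF finf surp] by blast
  have pair: "col p \<noteq> col q" if "{p,q} \<in> F" for p q
  proof -
    have "\<exists>x\<in>{p,q}. \<exists>y\<in>{p,q}. col x \<noteq> col y" using col that by (rule bspec)
    thus ?thesis by auto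
  qed
  have ab: "col a \<noteq> col b" by (rule pair) (simp add: F_def P_def)
  have vw: "col v \<noteq> col w" by (rule pair) (simp add: F_def P_def)
  have Nv: "a \<in> N v" "b \<in> N v" "a \<in> N w" "b \<in> N w" "v \<in> N a" "w \<in> N a" "v \<in> N b" "w \<in> N b"
    using e sym by (auto simp: N_iff)
  have "good col" unfolding good_def
  proof
    fix u assume u: "u \<in> V"
    show "\<exists>x\<in>N u. \<exists>y\<in>N u. col x \<noteq> col y"
    proof (cases "u \<in> S")
      case False
      hence "N u \<in> F" using u by (auto simp: F_def)
      thus ?thesis using col by blast
    next
      case True
      hence "u = v \<or> u = a \<or> u = w \<or> u = b" by (auto simp: S_def)
      thus ?thesis
      proof (elim disjE)
        assume "u = v" thus ?thesis using Nv ab by blast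
      next
        assume "u = a" thus ?thesis using Nv vw by blast
      next
        assume "u = w" thus ?thesis using Nv ab by blast
      next
        assume "u = b" thus ?thesis using Nv vw by blast
      qed
    qed
  qed
  thus ?thesis by blast
qed

end

locale tg = cg +
  assumes nofour: "\<And>p q r s. E p q \<Longrightarrow> E q r \<Longrightarrow> E r s \<Longrightarrow> E s p \<Longrightarrow> p \<noteq> r \<Longrightarrow> q \<noteq> s \<Longrightarrow> False"
    and tri: "\<And>v. v \<in> V \<Longrightarrow> \<exists>a b. E v a \<and> E v b \<and> E a b"
begin

definition Tr where "Tr u = insert u {w \<in> N u. \<exists>t\<in>N u. E w t}"
definition ext where "ext u = (THE e. e \<in> N u \<and> e \<notin> Tr u)"

lemma card3_obtain:
  assumes "card A = 3" "a \<in> A" "b \<in> A" "a \<noteq> b"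
  obtains e where "A = {a,b,e}" "e \<noteq> a" "e \<noteq> b"
proof -
  have fA: "finite A" using assms(1) by (metis card.infinite zero_neq_numeral)
  have "card (A - {a,b}) = 1" using assms fA by (simp add: card_Diff_subset)
  then obtain e where e: "A - {a,b} = {e}" by (auto simp: card_Suc_eq)
  hence "A = {a,b,e}" "e \<noteq> a" "e \<noteq> b" using assms by auto
  thus ?thesis using that by blast
qed

lemma struct:
  assumes u: "u \<in> V"
  shows "\<exists>a b. E u a \<and> E u b \<and> E a b \<and> a \<noteq> b \<and> Tr u = {u,a,b} \<and> N u = {a,b,ext u}
          \<and> ext u \<noteq> a \<and> ext u \<noteq> b \<and> E u (ext u)"
proof -
  obtain a b where ab: "E u a" "E u b" "E a b" using tri[OF u] by blast
  have anb: "a \<noteq> b" using ab E_neq by blast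
  have inN: "a \<in> N u" "b \<in> N u" using ab by (auto simp: N_iff)
  obtain e where e: "N u = {a,b,e}" "e \<noteq> a" "e \<noteq> b" using card3_obtain[OF cardN[OF u] inN anb] by blast
  have Eue: "E u e" using e by (auto simp: N_iff[symmetric])
  have nae: "\<not> E e a" using nofour[of b a e u] ab Eue e sym E_neq by blast
  have nbe: "\<not> E e b" using nofour[of a b e u] ab Eue e sym E_neq by blast
  have Tr: "Tr u = {u,a,b}"
  proof -
    have "{w \<in> N u. \<exists>t\<in>N u. E w t} = {a,b}"
    proof
      show "{w \<in> N u. \<exists>t\<in>N u. E w t} \<subseteq> {a, b}"
        using e nae nbe irr by auto
      show "{a, b} \<subseteq> {w \<in> N u. \<exists>t\<in>N u. E w t}"
        using inN ab sym by auto
    qed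
    thus ?thesis by (simp add: Tr_def)
  qed
  have eu: "e \<noteq> u" using Eue E_neq by blast
  have ext: "ext u = e"
  proof -
    have "\<And>e'. e' \<in> N u \<and> e' \<notin> Tr u \<Longrightarrow> e' = e" using e Tr by auto
    moreover have "e \<in> N u \<and> e \<notin> Tr u" using e Tr eu by auto
    ultimately show ?thesis unfolding ext_def by (rule the_equality[rotated]) 
  qed
  show ?thesis using ab anb Tr e ext Eue by auto
qed

lemma Tr_self: "u \<in> Tr u" by (simp add: Tr_def)

lemma Tr_sub: "u \<in> V \<Longrightarrow> Tr u \<subseteq> V" using N_sub by (auto simp: Tr_def)

lemma Tr_card: "u \<in> V \<Longrightarrow> card (Tr u) = 3"
proof -
  assume u: "u \<in> V"
  obtain a b where "E u a" "E u b" "a \<noteq> b" "Tr u = {u,a,b}" using struct[OF u] by blast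
  thus ?thesis using E_neq by auto
qed

lemma Tr_adj: "u \<in> V \<Longrightarrow> p \<in> Tr u \<Longrightarrow> q \<in> Tr u \<Longrightarrow> p \<noteq> q \<Longrightarrow> E p q"
proof -
  assume u: "u \<in> V" and pq: "p \<in> Tr u" "q \<in> Tr u" "p \<noteq> q"
  obtain a b where ab: "E u a" "E u b" "E a b" "Tr u = {u,a,b}" using struct[OF u] by blast
  thus ?thesis using pq sym by auto
qed

lemma Tr_same:
  assumes u: "u \<in> V" and p: "p \<in> Tr u"
  shows "Tr p = Tr u"
proof -
  obtain a b where ab: "E u a" "E u b" "E a b" "a \<noteq> b" "Tr u = {u,a,b}" using struct[OF u] by blast
  have gen: "Tr a = {u,a,b}" if h: "E u a" "E u b" "E a b" "a \<noteq> b" for a b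
  proof -
    have aV: "a \<in> V" using h inV2 by blast
    obtain a1 a2 where aa: "E a a1" "E a a2" "a1 \<noteq> a2" "Tr a = {a,a1,a2}" using struct[OF aV] by blast
    have uN: "u \<in> N a" "b \<in> N a" using h sym by (auto simp: N_iff)
    have "u \<in> Tr a" using uN h by (auto simp: Tr_def)
    moreover have "b \<in> Tr a" using uN h sym unfolding Tr_def by blast
    moreover have "u \<noteq> a" "b \<noteq> a" "u \<noteq> b" using h E_neq by auto
    ultimately have "{a1,a2} = {u,b}" using aa by auto
    thus ?thesis using aa by auto
  qed
  have "p = u \<or> p = a \<or> p = b" using p ab by auto
  thus ?thesis
  proof (elim disjE)
    assume "p = u" thus ?thesis by simp
  next
    assume "p = a" thus ?thesis using gen[OF ab(1-4)] ab(5) by auto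
  next
    assume pb: "p = b"
    have "Tr b = {u,b,a}" using gen[OF ab(2) ab(1)] ab sym by auto
    thus ?thesis using pb ab(5) by auto
  qed
qed

lemma Tr_meet: "u \<in> V \<Longrightarrow> v \<in> V \<Longrightarrow> p \<in> Tr u \<Longrightarrow> p \<in> Tr v \<Longrightarrow> Tr u = Tr v"
  using Tr_same by metis

lemma ext_props:
  assumes u: "u \<in> V"
  shows "E u (ext u)" "ext u \<notin> Tr u" "ext u \<in> V" "N u = (Tr u - {u}) \<union> {ext u}"
proof -
  obtain a b where ab: "E u a" "E u b" "E a b" "a \<noteq> b" "Tr u = {u,a,b}" "N u = {a,b,ext u}"
    "ext u \<noteq> a" "ext u \<noteq> b" "E u (ext u)" using struct[OF u] by blast
  show "E u (ext u)" by (rule ab(9))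
  have "ext u \<noteq> u" using E_neq[OF ab(9)] by simp
  thus "ext u \<notin> Tr u" using ab(5,7,8) by auto
  show "ext u \<in> V" using ab(9) inV2 by blast
  have "u \<noteq> a" "u \<noteq> b" "u \<noteq> ext u" using ab(1,2,9) E_neq by auto
  thus "N u = (Tr u - {u}) \<union> {ext u}" using ab(5,6) by auto
qed

lemma ext_ext:
  assumes u: "u \<in> V"
  shows "ext (ext u) = u"
proof -
  define e where "e = ext u"
  have eV: "e \<in> V" using ext_props[OF u] by (simp add: e_def)
  have ue: "u \<in> N e" using ext_props(1)[OF u] sym by (auto simp: N_iff e_def)
  have uT: "u \<notin> Tr e"
  proof
    assume "u \<in> Tr e"
    hence "Tr u = Tr e" using Tr_same[OF eV] by blast
    thus False using ext_props(2)[OF u] Tr_self[of e] by (simp add: e_def)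
  qed
  have "u \<in> (Tr e - {e}) \<union> {ext e}" using ue ext_props(4)[OF eV] by simp
  thus ?thesis using uT by (auto simp: e_def)
qed

end

fun privs :: "'a set list \<Rightarrow> bool" where
  "privs [] = True"
| "privs (p # ps) = ((\<exists>u\<in>p. u \<notin> \<Union>(set ps)) \<and> privs ps)"

lemma forest:
  assumes "privs ps" "\<forall>p\<in>set ps. finite p \<and> card p \<ge> 2" "Q \<subseteq> set ps" "Q \<noteq> {}"
  shows "card (\<Union>Q) \<ge> card Q + 1"
  using assms
proof (induction ps arbitrary: Q)
  case Nil thus ?case by simp
next
  case (Cons p ps)
  define Q' where "Q' = Q - {p}"
  have Q': "Q' \<subseteq> set ps" using Cons.prems(3) by (auto simp: Q'_def)
  have fin: "\<forall>q\<in>set ps. finite q \<and> card q \<ge> 2" using Cons.prems(2) by simp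
  have pr: "privs ps" using Cons.prems(1) by simp
  obtain u where u: "u \<in> p" "u \<notin> \<Union>(set ps)" using Cons.prems(1) by auto
  show ?case
  proof (cases "p \<in> Q")
    case False
    hence "Q \<subseteq> set ps" using Cons.prems(3) by auto
    thus ?thesis using Cons.IH[OF pr fin _ Cons.prems(4)] by blast
  next
    case True
    have fQ': "finite Q'" using Q' finite_subset by blast
    have fQ: "finite Q" using Cons.prems(3) finite_subset by blast
    have cQ: "card Q = card Q' + 1" using card.remove[OF fQ True] by (simp add: Q'_def)
    have UQ: "\<Union>Q = p \<union> \<Union>Q'" using True by (auto simp: Q'_def)
    have fp: "finite p" "card p \<ge> 2" using Cons.prems(2) by simp_all
    have "\<forall>q\<in>Q'. finite q" using Q' fin by blast
    hence fU': "finite (\<Union>Q')" using fQ' by blast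
    have fU: "finite (\<Union>Q)" using UQ fU' fp by simp
    show ?thesis
    proof (cases "Q' = {}")
      case True
      then have "\<Union>Q = p" using UQ by simp
      moreover have "card Q = 1" using cQ True by simp
      ultimately show ?thesis using fp by simp
    next
      case False
      have IH: "card (\<Union>Q') \<ge> card Q' + 1" using Cons.IH[OF pr fin Q' False] .
      have uQ: "u \<notin> \<Union>Q'" using u Q' by auto
      have c1: "card (insert u (\<Union>Q')) = card (\<Union>Q') + 1" using fU' uQ by simp
      have "insert u (\<Union>Q') \<subseteq> \<Union>Q" using UQ u by auto
      hence "card (insert u (\<Union>Q')) \<le> card (\<Union>Q)" using fU by (rule card_mono[rotated])
      thus ?thesis using c1 IH cQ by simp
    qed
  qed
qed

context tg
begin

lemma ext_out:
  assumes u: "u \<in> V" and r: "r \<in> Tr u" "r \<noteq> u"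
  shows "ext r \<notin> Tr u" "ext r \<notin> Tr (ext u)"
proof -
  have oV: "r \<in> V" using r Tr_sub[OF u] by blast
  have To: "Tr r = Tr u" using Tr_same[OF u r(1)] .
  show ne1: "ext r \<notin> Tr u" using ext_props(2)[OF oV] To by simp
  show "ext r \<notin> Tr (ext u)"
  proof
    assume h: "ext r \<in> Tr (ext u)"
    define z' where "z' = ext u"
    have z'V: "z' \<in> V" using ext_props(3)[OF u] by (simp add: z'_def)
    have neq: "ext r \<noteq> z'"
    proof
      assume "ext r = z'"
      hence "ext (ext r) = ext (ext u)" by (simp add: z'_def)
      thus False using ext_ext[OF oV] ext_ext[OF u] r(2) by simp
    qed
    have e1: "E z' (ext r)" using Tr_adj[OF z'V Tr_self h[folded z'_def]] neq by simp
    have e2: "E r u" using Tr_adj[OF u r(1) Tr_self r(2)] .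
    have e3: "E u z'" using ext_props(1)[OF u] by (simp add: z'_def)
    have e4: "E (ext r) r" using ext_props(1)[OF oV] sym by blast
    have n1: "r \<noteq> z'" using r(1) ext_props(2)[OF u] by (auto simp: z'_def)
    have n2: "u \<noteq> ext r" using ne1 Tr_self[of u] by auto
    show False using nofour[OF e2 e3 e1 e4 n1 n2] .
  qed
qed

lemma m_ex:
  assumes "q \<in> V" shows "\<exists>t. t \<in> Tr q \<and> t \<noteq> q"
proof -
  have c: "card (Tr q) = 3" using Tr_card[OF assms] .
  have fin: "finite (Tr q)" using c by (metis card.infinite zero_neq_numeral)
  have "card (Tr q - {q}) = 2" using c Tr_self[of q] fin by (simp add: card_Diff_subset)
  hence "Tr q - {q} \<noteq> {}" by (intro notI) simp
  thus ?thesis by blast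
qed

definition mt where "mt q = (SOME t. t \<in> Tr q \<and> t \<noteq> q)"

lemma mt: "q \<in> V \<Longrightarrow> mt q \<in> Tr q \<and> mt q \<noteq> q"
  unfolding mt_def using m_ex by (rule someI_ex) 

lemma third:
  assumes "q \<in> V" "p \<in> Tr q" "p \<noteq> q"
  shows "\<exists>t\<in>Tr q. t \<noteq> q \<and> t \<noteq> p"
proof -
  have c: "card (Tr q) = 3" using Tr_card[OF assms(1)] .
  have fin: "finite (Tr q)" using c by (metis card.infinite zero_neq_numeral)
  have "card (Tr q - {q,p}) = 1" using c assms Tr_self[of q] fin by (simp add: card_Diff_subset)
  hence "Tr q - {q,p} \<noteq> {}" by (intro notI) simp
  thus ?thesis by blast
qed

end

context tg
begin

lemma case3:
  assumes c: conn and z: "z \<in> V"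
  shows "\<exists>col. good col"
proof -
  obtain x y where zs: "E z x" "E z y" "E x y" "x \<noteq> y" "Tr z = {z,x,y}"
    using struct[OF z] by blast
  define z' where "z' = ext z"
  have z'V: "z' \<in> V" using ext_props(3)[OF z] by (simp add: z'_def)
  have Ezz': "E z z'" using ext_props(1)[OF z] by (simp add: z'_def)
  have z'T: "z' \<notin> Tr z" using ext_props(2)[OF z] by (simp add: z'_def)
  obtain x' y' where zs': "E z' x'" "E z' y'" "E x' y'" "x' \<noteq> y'" "Tr z' = {z',x',y'}"
    using struct[OF z'V] by blast
  have ez': "ext z' = z" using ext_ext[OF z] by (simp add: z'_def)
  have disj: "Tr z \<inter> Tr z' = {}"
  proof (rule ccontr)
    assume "Tr z \<inter> Tr z' \<noteq> {}"
    then obtain p where "p \<in> Tr z" "p \<in> Tr z'" by blast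
    hence "Tr z = Tr z'" using Tr_meet[OF z z'V] by blast
    thus False using z'T Tr_self[of z'] by simp
  qed
  have dz: "z \<noteq> x" "z \<noteq> y" using zs E_neq by auto
  have dz': "z' \<noteq> x'" "z' \<noteq> y'" using zs' E_neq by auto
  have cross: "z \<noteq> z'" "z \<noteq> x'" "z \<noteq> y'" "x \<noteq> z'" "x \<noteq> x'" "x \<noteq> y'" "y \<noteq> z'" "y \<noteq> x'" "y \<noteq> y'"
    using disj zs(5) zs'(5) by auto
  define W where "W = Tr z \<union> Tr z'"
  have Wdef: "W = {z,x,y,z',x',y'}" using zs(5) zs'(5) by (auto simp: W_def)
  have WV: "W \<subseteq> V" using Tr_sub[OF z] Tr_sub[OF z'V] by (auto simp: W_def)
  define P where "P = {{y,z},{x,z},{y',z'},{x',z'},{x,z'}}"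
  define F where "F = N ` (V - W) \<union> P"
  have finP: "finite P" by (simp add: P_def)
  have finF: "finite F" using finV finP by (simp add: F_def)
  have finf: "\<forall>f\<in>F. finite f" using finN by (auto simp: F_def P_def)
  have PW: "\<Union>P \<subseteq> W" by (auto simp: P_def Wdef)
  have outer: "ext r \<notin> W" "r \<in> V" "Tr r \<subseteq> W" if r: "r \<in> W" "r \<noteq> z" "r \<noteq> z'" for r
  proof -
    have "r \<in> Tr z \<or> r \<in> Tr z'" using r by (auto simp: W_def)
    thus "ext r \<notin> W"
    proof
      assume "r \<in> Tr z"
      thus ?thesis using ext_out[OF z _ r(2)] by (auto simp: W_def z'_def)
    next
      assume "r \<in> Tr z'"
      thus ?thesis using ext_out[OF z'V _ r(3)] ez' by (auto simp: W_def)
    qed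
    show "r \<in> V" using r WV by blast
    from \<open>r \<in> Tr z \<or> r \<in> Tr z'\<close> show "Tr r \<subseteq> W"
    proof
      assume "r \<in> Tr z" hence "Tr r = Tr z" by (rule Tr_same[OF z])
      thus ?thesis by (simp add: W_def)
    next
      assume "r \<in> Tr z'" hence "Tr r = Tr z'" by (rule Tr_same[OF z'V])
      thus ?thesis by (simp add: W_def)
    qed
  qed
  have key: "card Y + card Q < card (NS Y \<union> \<Union>Q)"
    if Y: "Y \<subseteq> V - W" and Q: "Q \<subseteq> P" and ne: "Y \<noteq> {} \<or> Q \<noteq> {}" for Y Q
  proof -
    have YV: "Y \<subseteq> V" using Y by auto
    have YW: "\<And>w. w \<in> W \<Longrightarrow> w \<notin> Y" using Y by auto
    define K where "K = NS Y \<inter> W"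
    have notNS: "w \<notin> NS Y" if "N w \<subseteq> W" for w
    proof
      assume "w \<in> NS Y"
      then obtain y0 where y0: "y0 \<in> Y" "E y0 w" by (auto simp: NS_iff)
      hence "y0 \<in> N w" using sym by (auto simp: N_iff)
      thus False using that YW y0(1) by blast
    qed
    have "N z \<subseteq> W" using ext_props(4)[OF z] Tr_self[of z'] by (auto simp: W_def z'_def)
    hence zK1: "z \<notin> NS Y" by (rule notNS)
    have "N z' \<subseteq> W" using ext_props(4)[OF z'V] ez' Tr_self[of z] by (auto simp: W_def)
    hence zK2: "z' \<notin> NS Y" by (rule notNS)
    note zK = zK1 zK2
    have Kout: "r \<in> W" "r \<noteq> z" "r \<noteq> z'" if "r \<in> K" for r using that zK by (auto simp: K_def)
    have extY: "ext r \<in> Y" if r: "r \<in> K" for r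
    proof -
      have rV: "r \<in> V" using outer(2)[OF Kout[OF r]] .
      obtain y0 where y0: "y0 \<in> Y" "E y0 r" using r by (auto simp: K_def NS_iff)
      have "y0 \<in> N r" using y0 sym by (auto simp: N_iff)
      hence "y0 \<in> (Tr r - {r}) \<union> {ext r}" using ext_props(4)[OF rV] by simp
      moreover have "y0 \<notin> Tr r" using outer(3)[OF Kout[OF r]] YW y0 by blast
      ultimately show ?thesis using y0 by auto
    qed
    have dK: "dfc Y r \<ge> 2" if r: "r \<in> K" for r
    proof -
      have rV: "r \<in> V" using outer(2)[OF Kout[OF r]] .
      have "N r \<inter> Y \<subseteq> {ext r}" using ext_props(4)[OF rV] outer(3)[OF Kout[OF r]] YW by auto
      hence "card (N r \<inter> Y) \<le> 1" using card_mono[of "{ext r}" "N r \<inter> Y"] by simp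
      thus ?thesis by (simp add: dfc_def)
    qed
    define cf where "cf r = (if ext r \<in> NS Y then ext r else mt (ext r))" for r
    have cprops: "cf r \<in> Tr (ext r) \<and> cf r \<in> NS Y \<and> cf r \<notin> W \<and> dfc Y (cf r) \<ge> 1" if r: "r \<in> K" for r
    proof -
      define e where "e = ext r"
      have rV: "r \<in> V" using outer(2)[OF Kout[OF r]] .
      have eY: "e \<in> Y" using extY[OF r] by (simp add: e_def)
      have eV: "e \<in> V" using eY YV by blast
      have eW: "e \<notin> W" using eY Y by auto
      have TeW: "Tr e \<inter> W = {}"
      proof (rule ccontr)
        assume "Tr e \<inter> W \<noteq> {}"
        then obtain p where p: "p \<in> Tr e" "p \<in> W" by blast
        hence "p \<in> Tr z \<or> p \<in> Tr z'" by (auto simp: W_def)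
        hence "Tr e = Tr z \<or> Tr e = Tr z'" using Tr_meet[OF eV z] Tr_meet[OF eV z'V] p(1) by blast
        thus False using eW Tr_self[of e] by (auto simp: W_def)
      qed
      have mt1: "mt e \<in> Tr e" "mt e \<noteq> e" using mt[OF eV] by auto
      show ?thesis
      proof (cases "e \<in> NS Y")
        case True
        hence cfe: "cf r = e" by (simp add: cf_def e_def)
        have "r \<in> N e" using ext_props(1)[OF rV] sym by (auto simp: N_iff e_def)
        moreover have "r \<notin> Y" using YW Kout[OF r] by blast
        ultimately have "dfc Y e \<ge> 1" using dfc1[OF eV] by blast
        moreover have "cf r \<in> Tr (ext r)" using cfe Tr_self[of e] by (simp add: e_def)
        moreover have "cf r \<notin> W" using cfe Tr_self[of e] TeW by blast
        ultimately show ?thesis using cfe True by simp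
      next
        case False
        hence cfe: "cf r = mt e" by (simp add: cf_def e_def)
        have "E e (mt e)" using Tr_adj[OF eV Tr_self mt1(1)] mt1(2) by auto
        hence inNS: "mt e \<in> NS Y" using eY by (auto simp: NS_iff)
        obtain t where t: "t \<in> Tr e" "t \<noteq> e" "t \<noteq> mt e" using third[OF eV mt1] by blast
        have mV: "mt e \<in> V" using mt1(1) Tr_sub[OF eV] by blast
        have "E (mt e) t" using Tr_adj[OF eV mt1(1) t(1)] t(3) by auto
        hence tN: "t \<in> N (mt e)" by (simp add: N_iff)
        have "E t e" using Tr_adj[OF eV t(1) Tr_self t(2)] .
        hence "t \<notin> Y" using False by (auto simp: NS_iff)
        hence "dfc Y (mt e) \<ge> 1" using dfc1[OF mV tN] by blast
        moreover have "mt e \<notin> W" using mt1(1) TeW by blast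
        ultimately show ?thesis using cfe inNS mt1(1) by (auto simp: e_def)
      qed
    qed
    have inj: "inj_on cf K"
    proof
      fix r1 r2 assume r: "r1 \<in> K" "r2 \<in> K" and eq: "cf r1 = cf r2"
      show "r1 = r2"
      proof (rule ccontr)
        assume neq: "r1 \<noteq> r2"
        have r1V: "r1 \<in> V" and r2V: "r2 \<in> V" using outer(2)[OF Kout[OF r(1)]] outer(2)[OF Kout[OF r(2)]] by auto
        have e1Y: "ext r1 \<in> Y" and e2Y: "ext r2 \<in> Y" using extY r by auto
        have e1V: "ext r1 \<in> V" and e2V: "ext r2 \<in> V" using e1Y e2Y YV by auto
        have eneq: "ext r1 \<noteq> ext r2"
        proof
          assume "ext r1 = ext r2"
          hence "ext (ext r1) = ext (ext r2)" by simp
          thus False using ext_ext[OF r1V] ext_ext[OF r2V] neq by simp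
        qed
        have "cf r1 \<in> Tr (ext r1)" "cf r2 \<in> Tr (ext r2)" using cprops r by auto
        hence "Tr (ext r1) = Tr (ext r2)" using eq Tr_meet[OF e1V e2V] by auto
        hence "ext r2 \<in> Tr (ext r1)" using Tr_self[of "ext r2"] by simp
        hence E12: "E (ext r1) (ext r2)" using Tr_adj[OF e1V Tr_self] eneq by auto
        have "ext r1 \<in> NS Y" using E12 e2Y sym by (auto simp: NS_iff)
        moreover have "ext r2 \<in> NS Y" using E12 e1Y by (auto simp: NS_iff)
        ultimately have "cf r1 = ext r1" "cf r2 = ext r2" by (auto simp: cf_def)
        thus False using eq eneq by simp
      qed
    qed
    have cnt: "3 * card (NS Y) = 3 * card Y + (\<Sum>u\<in>NS Y. dfc Y u)" by (rule count[OF YV])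
    have KNS: "K \<subseteq> NS Y" by (auto simp: K_def)
    have cKNS: "cf ` K \<subseteq> NS Y" using cprops by auto
    have dj: "K \<inter> cf ` K = {}" using cprops by (auto simp: K_def)
    have finK: "finite K" using KNS finNS finite_subset by blast
    have s3: "(\<Sum>u\<in>NS Y. dfc Y u) \<ge> 3 * card K"
    proof -
      have "(\<Sum>u\<in>K \<union> cf ` K. dfc Y u) \<le> (\<Sum>u\<in>NS Y. dfc Y u)"
        using KNS cKNS finNS by (intro sum_mono2) auto
      moreover have "(\<Sum>u\<in>K \<union> cf ` K. dfc Y u) = (\<Sum>u\<in>K. dfc Y u) + (\<Sum>u\<in>cf ` K. dfc Y u)"
        using dj finK by (intro sum.union_disjoint) auto
      moreover have "(\<Sum>u\<in>K. dfc Y u) \<ge> 2 * card K"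
        using dK finK by (intro sum_ge_card) auto
      moreover have "(\<Sum>u\<in>cf ` K. dfc Y u) \<ge> 1 * card (cf ` K)"
        using cprops finK by (intro sum_ge_card) auto
      moreover have "card (cf ` K) = card K" using inj by (rule card_image)
      ultimately show ?thesis by simp
    qed
    have sY: "Y \<noteq> {} \<Longrightarrow> (\<Sum>u\<in>NS Y. dfc Y u) \<ge> 1"
      by (rule tight_sum[OF c YV _ Ezz']) (use YW in \<open>auto simp: W_def Tr_self\<close>)
    have UQW: "\<Union>Q \<subseteq> W" using Q PW by blast
    have finUQ: "finite (\<Union>Q)" using UQW by (rule finite_subset) (simp add: Wdef)
    have un: "card (NS Y \<union> \<Union>Q) = card (NS Y) + card (\<Union>Q - NS Y)"
    proof -
      have "NS Y \<union> \<Union>Q = NS Y \<union> (\<Union>Q - NS Y)" by blast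
      moreover have "finite (\<Union>Q - NS Y)" using finUQ by blast
      ultimately show ?thesis using finNS[of Y] card_Un_disjoint[of "NS Y" "\<Union>Q - NS Y"] by auto
    qed
    have dif: "card (\<Union>Q - NS Y) + card K \<ge> card (\<Union>Q)"
    proof -
      have "card (\<Union>Q - NS Y) = card (\<Union>Q) - card (\<Union>Q \<inter> NS Y)"
        using finUQ by (intro card_Diff_subset_Int) auto
      moreover have "card (\<Union>Q \<inter> NS Y) \<le> card K"
        using UQW finK by (intro card_mono) (auto simp: K_def)
      moreover have "card (\<Union>Q \<inter> NS Y) \<le> card (\<Union>Q)" using finUQ by (intro card_mono) auto
      ultimately show ?thesis by linarith
    qed
    show ?thesis
    proof (cases "Q = {}")
      case True
      hence "Y \<noteq> {}" using ne by simp
      hence "(\<Sum>u\<in>NS Y. dfc Y u) \<ge> 1" by (rule sY)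
      thus ?thesis using cnt True by simp
    next
      case False
      have pr: "privs [{y',z'},{x',z'},{x,z'},{x,z},{y,z}]" using dz dz' cross zs(4) zs'(4) by auto
      have c2: "\<forall>p\<in>set [{y',z'},{x',z'},{x,z'},{x,z},{y,z}]. finite p \<and> card p \<ge> 2"
        using dz dz' cross zs(4) zs'(4) by auto
      have "set [{y',z'},{x',z'},{x,z'},{x,z},{y,z}] = P" by (auto simp: P_def)
      hence "card (\<Union>Q) \<ge> card Q + 1" using forest[OF pr c2 _ False] Q by simp
      thus ?thesis using un dif cnt s3 by linarith
    qed
  qed
  have surp: "\<forall>G\<subseteq>F. G \<noteq> {} \<longrightarrow> card G < card (\<Union>G)"
  proof (intro allI impI)
    fix G assume G: "G \<subseteq> F" "G \<noteq> {}"
    define Y where "Y = {u\<in>V - W. N u \<in> G}"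
    define Q where "Q = G \<inter> P"
    have Y: "Y \<subseteq> V - W" by (auto simp: Y_def)
    have Q: "Q \<subseteq> P" by (auto simp: Q_def)
    have GYQ: "G \<subseteq> N ` Y \<union> Q" using G(1) by (auto simp: F_def Y_def Q_def)
    have ne: "Y \<noteq> {} \<or> Q \<noteq> {}" using GYQ G(2) by auto
    have fY: "finite Y" using Y finV finite_subset by blast
    have fQ: "finite Q" using finite_subset[OF Q finP] .
    have "card G \<le> card (N ` Y \<union> Q)" using GYQ fY fQ by (simp add: card_mono)
    also have "\<dots> \<le> card (N ` Y) + card Q" by (rule card_Un_le)
    also have "\<dots> \<le> card Y + card Q" using fY by (simp add: card_image_le)
    also have "\<dots> < card (NS Y \<union> \<Union>Q)" by (rule key[OF Y Q ne])
    also have "\<dots> \<le> card (\<Union>G)"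
    proof (rule card_mono)
      have "finite G" using G(1) finF finite_subset by blast
      moreover have "\<forall>g\<in>G. finite g" using G(1) finf by blast
      ultimately show "finite (\<Union>G)" by auto
      show "NS Y \<union> \<Union>Q \<subseteq> \<Union>G" by (auto simp: NS_def Y_def Q_def)
    qed
    finally show "card G < card (\<Union>G)" .
  qed
  obtain col :: "'a \<Rightarrow> bool" where col: "\<forall>f\<in>F. \<exists>u\<in>f. \<exists>u'\<in>f. col u \<noteq> col u'"
    using surplus_color[OF finF finf surp] by blast
  have pair: "col p \<noteq> col q" if "{p,q} \<in> F" for p q
  proof -
    have "\<exists>x\<in>{p,q}. \<exists>y\<in>{p,q}. col x \<noteq> col y" using col that by (rule bspec)
    thus ?thesis by auto
  qed
  have p1: "col y \<noteq> col z" by (rule pair) (simp add: F_def P_def)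
  have p2: "col x \<noteq> col z" by (rule pair) (simp add: F_def P_def)
  have p3: "col y' \<noteq> col z'" by (rule pair) (simp add: F_def P_def)
  have p4: "col x' \<noteq> col z'" by (rule pair) (simp add: F_def P_def)
  have p5: "col x \<noteq> col z'" by (rule pair) (simp add: F_def P_def)
  have p6: "col x' \<noteq> col z" using p2 p4 p5 by auto
  have TrA: "E p q" if "p \<in> Tr u" "q \<in> Tr u" "p \<noteq> q" "u \<in> {z,z'}" for p q u
    using that Tr_adj[OF z] Tr_adj[OF z'V] by auto
  have Nz: "x \<in> N z" "z' \<in> N z" using zs(1) Ezz' by (auto simp: N_iff)
  have Nx: "y \<in> N x" "z \<in> N x" using zs sym by (auto simp: N_iff)
  have Ny: "x \<in> N y" "z \<in> N y" using zs sym by (auto simp: N_iff)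
  have Nz': "x' \<in> N z'" "z \<in> N z'" using zs'(1) Ezz' sym by (auto simp: N_iff)
  have Nx': "y' \<in> N x'" "z' \<in> N x'" using zs' sym by (auto simp: N_iff)
  have Ny': "x' \<in> N y'" "z' \<in> N y'" using zs' sym by (auto simp: N_iff)
  have "good col" unfolding good_def
  proof
    fix u assume u: "u \<in> V"
    show "\<exists>a\<in>N u. \<exists>b\<in>N u. col a \<noteq> col b"
    proof (cases "u \<in> W")
      case False
      hence "N u \<in> F" using u by (auto simp: F_def)
      thus ?thesis using col by blast
    next
      case True
      hence "u = z \<or> u = x \<or> u = y \<or> u = z' \<or> u = x' \<or> u = y'" by (auto simp: Wdef)
      thus ?thesis
      proof (elim disjE)
        assume "u = z" thus ?thesis using Nz p5 by blast
      next
        assume "u = x" thus ?thesis using Nx p1 by blast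
      next
        assume "u = y" thus ?thesis using Ny p2 by blast
      next
        assume "u = z'" thus ?thesis using Nz' p6 by blast
      next
        assume "u = x'" thus ?thesis using Nx' p3 by blast
      next
        assume "u = y'" thus ?thesis using Ny' p4 by blast
      qed
    qed
  qed
  thus ?thesis by blast
qed

end

definition loc :: "'a set \<Rightarrow> ('a \<Rightarrow> 'a \<Rightarrow> bool) \<Rightarrow> bool" where
  "loc V E \<longleftrightarrow> (\<forall>v\<in>V. \<exists>a b. a \<in> neighbours V E v \<and> b \<in> neighbours V E v \<and> a \<noteq> b \<and>
      (E a b \<or> (\<exists>w. w \<noteq> v \<and> E a w \<and> E b w)))"

context cg
begin

lemma conn_case:
  assumes c: conn and l: "loc V E"
  shows "\<exists>col. good col"
proof (cases "V = {}")
  case True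
  hence "good (\<lambda>_. True)" unfolding good_def by blast
  thus ?thesis by blast
next
  case nonempty: False
  show ?thesis
  proof (cases "\<exists>v a w b. E v a \<and> E a w \<and> E w b \<and> E b v \<and> v \<noteq> w \<and> a \<noteq> b")
    case True
    then obtain v a w b where "E v a" "E a w" "E w b" "E b v" "v \<noteq> w" "a \<noteq> b" by blast
    thus ?thesis using case4[OF c] by blast
  next
    case False
    have nf: "False" if "E p q" "E q r" "E r s" "E s p" "p \<noteq> r" "q \<noteq> s" for p q r s
      using False that by blast
    have tr: "\<exists>a b. E v a \<and> E v b \<and> E a b" if v: "v \<in> V" for v
    proof -
      from l[unfolded loc_def, rule_format, OF v]
      obtain a b where ab: "a \<in> N v" "b \<in> N v" "a \<noteq> b" "E a b \<or> (\<exists>w. w \<noteq> v \<and> E a w \<and> E b w)"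
        by blast
      have Eva: "E v a" "E v b" using ab by (auto simp: N_iff)
      have "E a b"
      proof (rule ccontr)
        assume "\<not> E a b"
        then obtain w where w: "w \<noteq> v" "E a w" "E b w" using ab by blast
        show False using nf[OF Eva(1) w(2) sym[OF w(3)] sym[OF Eva(2)]] w(1) ab(3) by blast
      qed
      thus ?thesis using Eva by blast
    qed
    have "tg V E"
    proof (intro tg.intro tg_axioms.intro)
      show "cg V E" by (rule cg_axioms)
      show "\<And>p q r s. E p q \<Longrightarrow> E q r \<Longrightarrow> E r s \<Longrightarrow> E s p \<Longrightarrow> p \<noteq> r \<Longrightarrow> q \<noteq> s \<Longrightarrow> False"
        by (rule nf)
      show "\<And>v. v \<in> V \<Longrightarrow> \<exists>a b. E v a \<and> E v b \<and> E a b" by (rule tr)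
    qed
    then interpret tg V E .
    obtain z where "z \<in> V" using nonempty by blast
    thus ?thesis using case3[OF c] by blast
  qed
qed

end

lemma restr:
  assumes cgV: "cg V E" and S: "S \<subseteq> V" and cl: "\<forall>v\<in>S. neighbours V E v \<subseteq> S"
  defines "E' \<equiv> (\<lambda>u v. E u v \<and> u \<in> S \<and> v \<in> S)"
  shows "cg S E'" "\<forall>v\<in>S. neighbours S E' v = neighbours V E v" "loc V E \<Longrightarrow> loc S E'"
proof -
  interpret cg V E by fact
  have nb: "neighbours S E' v = neighbours V E v" if v: "v \<in> S" for v
    using cl v S by (auto simp: neighbours_def E'_def)
  show "\<forall>v\<in>S. neighbours S E' v = neighbours V E v" using nb by blast
  have sg': "simple_graph S E'"
    unfolding simple_graph_def E'_def using finV S finite_subset sym irr by blast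
  have cub': "cubic S E'" unfolding cubic_def using nb cardN S by auto
  show "cg S E'" using sg' cub' by (rule cg.intro)
  assume l: "loc V E"
  show "loc S E'" unfolding loc_def
  proof
    fix v assume v: "v \<in> S"
    have vV: "v \<in> V" using v S by blast
    from l[unfolded loc_def, rule_format, OF vV]
    obtain a b where ab: "a \<in> N v" "b \<in> N v" "a \<noteq> b" "E a b \<or> (\<exists>w. w \<noteq> v \<and> E a w \<and> E b w)"
      by blast
    have abS: "a \<in> S" "b \<in> S" using ab cl v by auto
    have "E' a b \<or> (\<exists>w. w \<noteq> v \<and> E' a w \<and> E' b w)"
    proof (cases "E a b")
      case True thus ?thesis using abS by (simp add: E'_def)
    next
      case False
      then obtain w where w: "w \<noteq> v" "E a w" "E b w" using ab by blast
      have "w \<in> N a" using w by (simp add: N_iff)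
      hence "w \<in> S" using cl abS by blast
      thus ?thesis using w abS by (auto simp: E'_def)
    qed
    thus "\<exists>a b. a \<in> neighbours S E' v \<and> b \<in> neighbours S E' v \<and> a \<noteq> b \<and>
      (E' a b \<or> (\<exists>w. w \<noteq> v \<and> E' a w \<and> E' b w))" using ab nb[OF v] by blast
  qed
qed

lemma main:
  assumes "cg V E" "loc V E"
  shows "\<exists>col. cg.good V E col"
  using assms
proof (induction "card V" arbitrary: V E rule: less_induct)
  case less
  interpret cg V E by fact
  show ?case
  proof (cases conn)
    case True thus ?thesis using conn_case less.prems(2) by blast
  next
    case False
    then obtain S where S: "S \<subseteq> V" "S \<noteq> {}" "\<forall>v\<in>S. N v \<subseteq> S" "S \<noteq> V"
      by (auto simp: conn_def)
    define T where "T = V - S"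
    have T: "T \<subseteq> V" "T \<noteq> {}" "\<forall>v\<in>T. N v \<subseteq> T"
    proof -
      show "T \<subseteq> V" by (auto simp: T_def)
      show "T \<noteq> {}" using S by (auto simp: T_def)
      show "\<forall>v\<in>T. N v \<subseteq> T"
      proof (intro ballI subsetI)
        fix v u assume v: "v \<in> T" and u: "u \<in> N v"
        have uV: "u \<in> V" using u N_sub by blast
        show "u \<in> T"
        proof (rule ccontr)
          assume "u \<notin> T"
          hence "u \<in> S" using uV by (auto simp: T_def)
          moreover have "v \<in> N u" using u sym by (auto simp: N_iff)
          ultimately have "v \<in> S" using S(3) by blast
          thus False using v by (auto simp: T_def)
        qed
      qed
    qed
    define ES where "ES = (\<lambda>u v. E u v \<and> u \<in> S \<and> v \<in> S)"
    define ET where "ET = (\<lambda>u v. E u v \<and> u \<in> T \<and> v \<in> T)"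
    have rS: "cg S ES" "\<forall>v\<in>S. neighbours S ES v = N v" "loc S ES"
      using restr[OF less.prems(1) S(1) S(3)] less.prems(2) unfolding ES_def by auto
    have rT: "cg T ET" "\<forall>v\<in>T. neighbours T ET v = N v" "loc T ET"
      using restr[OF less.prems(1) T(1) T(3)] less.prems(2) unfolding ET_def by auto
    have cS: "card S < card V" using S finV by (simp add: psubset_card_mono)
    have "T \<subset> V" using T S(1,2) by (auto simp: T_def)
    hence cT: "card T < card V" using finV by (simp add: psubset_card_mono)
    obtain c1 where c1: "cg.good S ES c1" using less.hyps[OF cS rS(1) rS(3)] by blast
    obtain c2 where c2: "cg.good T ET c2" using less.hyps[OF cT rT(1) rT(3)] by blast
    define col where "col = (\<lambda>u. if u \<in> S then c1 u else c2 u)"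
    have "good col" unfolding good_def
    proof
      fix v assume v: "v \<in> V"
      show "\<exists>u\<in>N v. \<exists>u'\<in>N v. col u \<noteq> col u'"
      proof (cases "v \<in> S")
        case True
        have "\<exists>u\<in>neighbours S ES v. \<exists>u'\<in>neighbours S ES v. c1 u \<noteq> c1 u'"
          using c1 True unfolding cg.good_def[OF rS(1)] by blast
        hence "\<exists>u\<in>N v. \<exists>u'\<in>N v. c1 u \<noteq> c1 u'" using rS(2) True by simp
        then obtain u u' where uu: "u \<in> N v" "u' \<in> N v" "c1 u \<noteq> c1 u'" by blast
        have "u \<in> S" "u' \<in> S" using uu S(3) True by auto
        thus ?thesis using uu by (intro bexI[of _ u] bexI[of _ u']) (auto simp: col_def)
      next
        case False
        hence vT: "v \<in> T" using v by (auto simp: T_def)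
        have "\<exists>u\<in>neighbours T ET v. \<exists>u'\<in>neighbours T ET v. c2 u \<noteq> c2 u'"
          using c2 vT unfolding cg.good_def[OF rT(1)] by blast
        hence "\<exists>u\<in>N v. \<exists>u'\<in>N v. c2 u \<noteq> c2 u'" using rT(2) vT by simp
        then obtain u u' where uu: "u \<in> N v" "u' \<in> N v" "c2 u \<noteq> c2 u'" by blast
        have "u \<in> T" "u' \<in> T" using uu T(3) vT by auto
        hence "u \<notin> S" "u' \<notin> S" by (auto simp: T_def)
        thus ?thesis using uu by (intro bexI[of _ u] bexI[of _ u']) (auto simp: col_def)
      qed
    qed
    thus ?thesis by blast
  qed
qed

lemma L_pairs:
  assumes "L_edge i j"
  shows "(i,j) \<in> {(0,1),(1,0),(0,2),(2,0),(0,3),(3,0),(1,4),(4,1),(1,5),(5,1),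
                    (2,6),(6,2),(2,7),(7,2),(3,8),(8,3),(3,9),(9,3)}"
  using assms unfolding L_edge_def by (auto simp: doubleton_eq_iff)

context cg
begin

lemma card3_v:
  assumes "card A = 3" "v \<in> A"
  obtains p q where "A = {v,p,q}" "p \<noteq> q" "p \<noteq> v" "q \<noteq> v"
proof -
  have fA: "finite A" using assms(1) by (metis card.infinite zero_neq_numeral)
  have "card (A - {v}) = 2" using assms fA by simp
  then obtain p q where pq: "A - {v} = {p,q}" "p \<noteq> q" by (auto simp: card_2_iff)
  hence "A = {v,p,q}" "p \<noteq> v" "q \<noteq> v" using assms(2) by auto
  thus ?thesis using that pq(2) by blast
qed

lemma Lfree_loc:
  assumes nL: "\<not> has_L_subgraph V E"
  shows "loc V E"
proof (rule ccontr)
  assume "\<not> loc V E"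
  then obtain v where v: "v \<in> V" and H: "\<And>a b. a \<in> N v \<Longrightarrow> b \<in> N v \<Longrightarrow> a \<noteq> b \<Longrightarrow>
      \<not> E a b \<and> \<not> (\<exists>w. w \<noteq> v \<and> E a w \<and> E b w)"
    unfolding loc_def by blast
  obtain a b c where abc: "N v = {a,b,c}" "a \<noteq> b" "b \<noteq> c" "a \<noteq> c"
    using cardN[OF v] by (auto simp: card_3_iff)
  have Ev: "E v a" "E v b" "E v c" using abc(1) by (auto simp: N_iff[symmetric])
  have aV: "a \<in> V" "b \<in> V" "c \<in> V" using Ev inV2 by auto
  have vN: "v \<in> N a" "v \<in> N b" "v \<in> N c" using Ev sym by (auto simp: N_iff)
  obtain a1 a2 where A: "N a = {v,a1,a2}" "a1 \<noteq> a2" "a1 \<noteq> v" "a2 \<noteq> v"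
    using card3_v[OF cardN[OF aV(1)] vN(1)] by blast
  obtain b1 b2 where B: "N b = {v,b1,b2}" "b1 \<noteq> b2" "b1 \<noteq> v" "b2 \<noteq> v"
    using card3_v[OF cardN[OF aV(2)] vN(2)] by blast
  obtain c1 c2 where C: "N c = {v,c1,c2}" "c1 \<noteq> c2" "c1 \<noteq> v" "c2 \<noteq> v"
    using card3_v[OF cardN[OF aV(3)] vN(3)] by blast
  have Ea: "E a a1" "E a a2" using A(1) by (auto simp: N_iff[symmetric])
  have Eb: "E b b1" "E b b2" using B(1) by (auto simp: N_iff[symmetric])
  have Ec: "E c c1" "E c c2" using C(1) by (auto simp: N_iff[symmetric])
  have inN: "a \<in> N v" "b \<in> N v" "c \<in> N v" using abc by auto
  have nab: "\<not> E a b" "\<not> (\<exists>w. w \<noteq> v \<and> E a w \<and> E b w)" using H[OF inN(1) inN(2) abc(2)] by auto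
  have nac: "\<not> E a c" "\<not> (\<exists>w. w \<noteq> v \<and> E a w \<and> E c w)" using H[OF inN(1) inN(3) abc(4)] by auto
  have nbc: "\<not> E b c" "\<not> (\<exists>w. w \<noteq> v \<and> E b w \<and> E c w)" using H[OF inN(2) inN(3) abc(3)] by auto
  have nv: "v \<noteq> a" "v \<noteq> b" "v \<noteq> c" using Ev E_neq by auto
  have na: "a \<noteq> a1" "a \<noteq> a2" "b \<noteq> b1" "b \<noteq> b2" "c \<noteq> c1" "c \<noteq> c2"
    using Ea Eb Ec E_neq by auto
  have x1: "b \<noteq> a1" "b \<noteq> a2" "c \<noteq> a1" "c \<noteq> a2" "a \<noteq> b1" "a \<noteq> b2" "c \<noteq> b1" "c \<noteq> b2"
    "a \<noteq> c1" "a \<noteq> c2" "b \<noteq> c1" "b \<noteq> c2"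
    using Ea Eb Ec nab(1) nac(1) nbc(1) sym by metis+
  have x2: "a1 \<noteq> b1" "a1 \<noteq> b2" "a2 \<noteq> b1" "a2 \<noteq> b2"
    using nab(2) Ea Eb A B by blast+
  have x3: "a1 \<noteq> c1" "a1 \<noteq> c2" "a2 \<noteq> c1" "a2 \<noteq> c2"
    using nac(2) Ea Ec A C by blast+
  have x4: "b1 \<noteq> c1" "b1 \<noteq> c2" "b2 \<noteq> c1" "b2 \<noteq> c2"
    using nbc(2) Eb Ec B C by blast+
  define xs where "xs = [v,a,b,c,a1,a2,b1,b2,c1,c2]"
  have dist: "distinct xs" unfolding xs_def
    using abc nv na x1 x2 x3 x4 A B C by auto
  have len: "length xs = 10" by (simp add: xs_def)
  have inj: "inj_on (nth xs) L_verts"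
    using dist len by (intro inj_on_nth) (auto simp: L_verts_def)
  have allV: "set xs \<subseteq> V" using v aV Ea Eb Ec inV2 by (auto simp: xs_def)
  have img: "nth xs ` L_verts \<subseteq> V"
  proof
    fix y assume "y \<in> nth xs ` L_verts"
    then obtain i where "i \<in> L_verts" "y = xs ! i" by blast
    hence "y \<in> set xs" using len by (auto simp: L_verts_def)
    thus "y \<in> V" using allV by blast
  qed
  have edges: "\<forall>i\<in>L_verts. \<forall>j\<in>L_verts. L_edge i j \<longrightarrow> E (xs ! i) (xs ! j)"
  proof (intro ballI impI)
    fix i j assume "L_edge i j"
    hence "(i,j) \<in> {(0,1),(1,0),(0,2),(2,0),(0,3),(3,0),(1,4),(4,1),(1,5),(5,1),
                    (2,6),(6,2),(2,7),(7,2),(3,8),(8,3),(3,9),(9,3)}" by (rule L_pairs)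
    thus "E (xs ! i) (xs ! j)" using Ev Ea Eb Ec sym by (auto simp: xs_def numeral_eq_Suc)
  qed
  have "has_L_subgraph V E" unfolding has_L_subgraph_def using inj img edges by blast
  thus False using nL by simp
qed

end

theorem theorem2p1:
  fixes V :: "'a set" and E :: "'a \<Rightarrow> 'a \<Rightarrow> bool"
  assumes "simple_graph V E" and "cubic V E" and "\<not> has_L_subgraph V E"
  shows "\<exists>S1 S2. S1 \<union> S2 = V \<and> S1 \<inter> S2 = {} \<and>
           total_dominating V E S1 \<and> total_dominating V E S2"
proof -
  interpret cg V E using assms(1,2) by (rule cg.intro)
  have l: "loc V E" using Lfree_loc assms(3) by blast
  obtain col where g: "good col" using main[OF cg_axioms l] by blast
  define S1 where "S1 = {v\<in>V. col v}"
  define S2 where "S2 = {v\<in>V. \<not> col v}"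
  have td: "total_dominating V E {v\<in>V. col v = t}" for t
    unfolding total_dominating_def
  proof (intro conjI ballI)
    show "{v \<in> V. col v = t} \<subseteq> V" by blast
    fix v assume v: "v \<in> V"
    obtain u u' where uu: "u \<in> N v" "u' \<in> N v" "col u \<noteq> col u'" using g v unfolding good_def by blast
    show "\<exists>u\<in>{v \<in> V. col v = t}. E v u"
    proof (cases "col u = t")
      case True thus ?thesis using uu N_sub by (auto simp: N_iff[symmetric])
    next
      case False
      hence "col u' = t" using uu(3) by auto
      thus ?thesis using uu N_sub by (auto simp: N_iff[symmetric])
    qed
  qed
  have "total_dominating V E S1" using td[of True] by (simp add: S1_def)
  moreover have "total_dominating V E S2" using td[of False] by (simp add: S2_def)
  moreover have "S1 \<union> S2 = V" "S1 \<inter> S2 = {}" by (auto simp: S1_def S2_def)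
  ultimately show ?thesis by blast
qed

end
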